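(* Assume $a>2b$. For every self-intersected 6-periodic of type I in the elliptic billiard, the angles $\theta_i'$ between consecutive sides of its outer polygon satisfy $$\sum_{i=1}^6\cos(2\theta_i')=-\frac{2(a^2-4ab+b^2)}{(a-b)^2}=JL-6.$$
   Context: The elliptic billiard is $\mathcal{E}: x^2/a^2+y^2/b^2=1$, $a>b>0$, $c=\sqrt{a^2-b^2}$. An $N$-periodic is a closed billiard trajectory $P_1\dots P_N$ on $\mathcal{E}$ (at each vertex the normal to $\mathcal{E}$ bisects the angle between the incident segments); all segments are tangent to a fixed confocal conic (the caustic), and all closed trajectories tangent to a given caustic form a one-parameter family. Type I self-intersected 6-periodics (existing for $a>2b$) are the 6-periodics tangent to the confocal hyperbola $x^2/a''^2-y^2/b''^2=1$ with $a''=\frac{a^{3/2}\sqrt{a-2b}}{a-b}$, $b''=\frac{b^{3/2}\sqrt{2a-b}}{a-b}$; one member is $P_1=(0,b)$, $P_2=(k_x,k_y)$, $P_3=(k_x,-k_y)$, $P_4=(0,-b)$, $P_5=-P_2$, $P_6=-P_3$ with $k_x=\frac{a\sqrt{a(a-2b)}}{b-a}$, $k_y=\frac{b^2}{b-a}$. The outer polygon has vertices $P_i'$ = intersection of the tangent lines to $\mathcal{E}$ at $P_i$ and $P_{i+1}$; $\theta_i'$ is the angle at $P_i'$ between these two lines (the value of $\cos 2\theta_i'$ does not depend on which of the supplementary angles is chosen). $L=\frac{4(a^2-ab+b^2)}{a-b}$ is the common perimeter and $J=\frac12\nabla f(P_i)\cdot\hat v>0$ is Joachimsthal's constant ($f=x^2/a^2+y^2/b^2$),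 here $J=1/(a-b)$. *)

theory Defs
  imports "HOL-Analysis.Analysis"
begin

definition cross2 :: "real \<times> real \<Rightarrow> real \<times> real \<Rightarrow> real" where
  "cross2 u v = fst u * snd v - snd u * fst v"

definition unitv :: "real \<times> real \<Rightarrow> real \<times> real" where
  "unitv u = (1 / norm u) *\<^sub>R u"

definition on_ellipse :: "real \<Rightarrow> real \<Rightarrow> real \<times> real \<Rightarrow> bool" where
  "on_ellipse a b p \<longleftrightarrow> (fst p)\<^sup>2 / a\<^sup>2 + (snd p)\<^sup>2 / b\<^sup>2 = 1"

text \<open>(Half) gradient of f = x^2/a^2 + y^2/b^2, i.e. a normal vector to the ellipse at p.\<close>
definition ell_normal :: "real \<Rightarrow> real \<Rightarrow> real \<times> real \<Rightarrow> real \<times> real" where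
  "ell_normal a b p = (fst p / a\<^sup>2, snd p / b\<^sup>2)"

definition ell_tangent :: "real \<Rightarrow> real \<Rightarrow> real \<times> real \<Rightarrow> real \<times> real" where
  "ell_tangent a b p = (- snd p / b\<^sup>2, fst p / a\<^sup>2)"

text \<open>Billiard reflection law at vertex P with neighbours Q (previous) and R (next):
  the normal to the ellipse at P bisects the angle QPR, i.e. it is parallel to the sum of
  the unit vectors from P towards Q and towards R.\<close>
definition billiard_reflects :: "real \<Rightarrow> real \<Rightarrow> real \<times> real \<Rightarrow> real \<times> real \<Rightarrow> real \<times> real \<Rightarrow> bool" where
  "billiard_reflects a b Q P R \<longleftrightarrow>
     Q \<noteq> P \<and> R \<noteq> P \<and> cross2 (unitv (Q - P) + unitv (R - P)) (ell_normal a b P) = 0"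

text \<open>The line through P and Q is tangent to the hyperbola x^2/A^2 - y^2/B^2 = 1:
  it passes through a point h of the hyperbola and is orthogonal to the hyperbola's normal at h.\<close>
definition tangent_to_hyperbola :: "real \<Rightarrow> real \<Rightarrow> real \<times> real \<Rightarrow> real \<times> real \<Rightarrow> bool" where
  "tangent_to_hyperbola A B P Q \<longleftrightarrow>
     (\<exists>h. (fst h)\<^sup>2 / A\<^sup>2 - (snd h)\<^sup>2 / B\<^sup>2 = 1 \<and> cross2 (h - P) (Q - P) = 0
          \<and> inner (Q - P) (fst h / A\<^sup>2, - snd h / B\<^sup>2) = 0)"

definition caustic_a :: "real \<Rightarrow> real \<Rightarrow> real" where
  "caustic_a a b = a powr (3/2) * sqrt (a - 2*b) / (a - b)"

definition caustic_b :: "real \<Rightarrow> real \<Rightarrow> real" where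
  "caustic_b a b = b powr (3/2) * sqrt (2*a - b) / (a - b)"

definition billiard_periodic :: "real \<Rightarrow> real \<Rightarrow> nat \<Rightarrow> (nat \<Rightarrow> real \<times> real) \<Rightarrow> bool" where
  "billiard_periodic a b N P \<longleftrightarrow>
     (\<forall>i. on_ellipse a b (P i)) \<and> (\<forall>i. P (i + N) = P i) \<and>
     (\<forall>i. billiard_reflects a b (P i) (P (i + 1)) (P (i + 2)))"

definition typeI_6periodic :: "real \<Rightarrow> real \<Rightarrow> (nat \<Rightarrow> real \<times> real) \<Rightarrow> bool" where
  "typeI_6periodic a b P \<longleftrightarrow> billiard_periodic a b 6 P \<and>
     (\<forall>i. tangent_to_hyperbola (caustic_a a b) (caustic_b a b) (P i) (P (i + 1)))"

definition dir_angle :: "real \<times> real \<Rightarrow> real \<times> real \<Rightarrow> real" where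
  "dir_angle u v = arccos (inner u v / (norm u * norm v))"

text \<open>theta'_i: angle at the outer-polygon vertex P'_i between the tangents to the ellipse
  at P_i and P_(i+1).\<close>
definition outer_angle :: "real \<Rightarrow> real \<Rightarrow> (nat \<Rightarrow> real \<times> real) \<Rightarrow> nat \<Rightarrow> real" where
  "outer_angle a b P i = dir_angle (ell_tangent a b (P i)) (ell_tangent a b (P (i + 1)))"

definition perimL :: "real \<Rightarrow> real \<Rightarrow> real" where
  "perimL a b = 4 * (a\<^sup>2 - a*b + b\<^sup>2) / (a - b)"

definition joachJ :: "real \<Rightarrow> real \<Rightarrow> real" where
  "joachJ a b = 1 / (a - b)"

end

theory Submission
  imports Defs
begin


lemma hyp_tangent:
  fixes AA BB h1 h2 p1 p2 d1 d2 :: real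
  assumes AA: "AA > 0" and BB: "BB > 0"
    and e3: "h1^2/AA - h2^2/BB = 1"
    and e1: "(h1-p1)*d2 - (h2-p2)*d1 = 0"
    and e2: "d1*h1/AA - d2*h2/BB = 0"
    and nz: "d1 \<noteq> 0 \<or> d2 \<noteq> 0"
  shows "AA*d2^2 - BB*d1^2 = (p1*d2 - p2*d1)^2"
proof -
  have E2: "BB*d1*h1 = AA*d2*h2" using e2 AA BB by (simp add: field_simps)
  have E3: "BB*h1^2 - AA*h2^2 = AA*BB" using e3 AA BB by (simp add: field_simps)
  define w where "w = p1*d2 - p2*d1"
  have W: "w = h1*d2 - h2*d1" using e1 unfolding w_def by (simp add: algebra_simps)
  define G where "G = AA*d2^2 - BB*d1^2"
  have G0: "G \<noteq> 0"
  proof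
    assume G: "G = 0"
    have "BB*d1^2*(BB*h1^2 - AA*h2^2) = 0"
    proof -
      have "(BB*d1*h1)^2 = (AA*d2*h2)^2" using E2 by simp
      hence "BB^2*d1^2*h1^2 = AA*(AA*d2^2)*h2^2" by algebra
      also have "AA*d2^2 = BB*d1^2" using G unfolding G_def by simp
      finally show ?thesis by (simp add: algebra_simps power2_eq_square)
    qed
    hence "BB*d1^2*(AA*BB) = 0" using E3 by simp
    hence d1: "d1 = 0" using AA BB by simp
    hence "AA*d2^2 = 0" using G unfolding G_def by simp
    hence "d2 = 0" using AA by simp
    thus False using d1 nz by simp
  qed
  have H1: "G*h1 = AA*d2*w" unfolding G_def W using E2 by algebra
  have H2: "G*h2 = BB*d1*w" unfolding G_def W using E2 by algebra
  have "G^2*(AA*BB) = G^2*(BB*h1^2 - AA*h2^2)" using E3 by simp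
  also have "\<dots> = BB*(G*h1)^2 - AA*(G*h2)^2" by algebra
  also have "\<dots> = BB*(AA*d2*w)^2 - AA*(BB*d1*w)^2" by (simp only: H1 H2)
  also have "\<dots> = AA*BB*w^2*G" unfolding G_def by algebra
  finally have "G*(G*(AA*BB)) = G*(AA*BB*w^2)" by (simp add: algebra_simps power2_eq_square)
  hence "G*(AA*BB) = AA*BB*w^2" using G0 by simp
  hence "G = w^2" using AA BB by simp
  thus ?thesis unfolding G_def w_def .
qed

lemma caustic_sq:
  assumes "0 < b" "2*b < a"
  shows "(caustic_a a b)^2 = a^3*(a-2*b)/(a-b)^2" "(caustic_b a b)^2 = b^3*(2*a-b)/(a-b)^2"
proof -
  have a0: "a > 0" using assms by simp
  have pa: "(a powr (3/2))^2 = a^3"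
  proof -
    have "(a powr (3/2))^2 = a powr (3/2) * a powr (3/2)" by (simp add: power2_eq_square)
    also have "\<dots> = a powr 3" by (simp add: powr_add[symmetric])
    also have "\<dots> = a^3" using a0 by (simp add: powr_numeral)
    finally show ?thesis .
  qed
  have pb: "(b powr (3/2))^2 = b^3"
  proof -
    have "(b powr (3/2))^2 = b powr (3/2) * b powr (3/2)" by (simp add: power2_eq_square)
    also have "\<dots> = b powr 3" by (simp add: powr_add[symmetric])
    also have "\<dots> = b^3" using assms by (simp add: powr_numeral)
    finally show ?thesis .
  qed
  show "(caustic_a a b)^2 = a^3*(a-2*b)/(a-b)^2" unfolding caustic_a_def
    using pa assms by (simp add: power_mult_distrib power_divide)
  show "(caustic_b a b)^2 = b^3*(2*a-b)/(a-b)^2" unfolding caustic_b_def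
    using pb assms by (simp add: power_mult_distrib power_divide)
qed

lemma rel_from_tangent:
  fixes a b x y x' y' :: real
  assumes b: "0 < b" and ab: "2*b < a"
    and u1: "x^2+y^2 = 1" and u2: "x'^2+y'^2 = 1" and ne: "(x,y) \<noteq> (x',y')"
    and tg: "tangent_to_hyperbola (caustic_a a b) (caustic_b a b) (a*x, b*y) (a*x', b*y')"
  shows "(a-b)*(b*x*x' - a*y*y') = a*b"
proof -
  have a0: "a > 0" "a - b > 0" "a - 2*b > 0" "2*a - b > 0" using assms by auto
  define AA where "AA = a^3*(a-2*b)/(a-b)^2"
  define BB where "BB = b^3*(2*a-b)/(a-b)^2"
  have AA: "AA > 0" unfolding AA_def using a0 b by simp
  have BB: "BB > 0" unfolding BB_def using a0 b by simp
  obtain h where h: "(fst h)\<^sup>2 / AA - (snd h)\<^sup>2 / BB = 1"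
     "cross2 (h - (a*x, b*y)) ((a*x', b*y') - (a*x, b*y)) = 0"
     "inner ((a*x', b*y') - (a*x, b*y)) (fst h / AA, - snd h / BB) = 0"
    using tg caustic_sq[OF b ab] unfolding tangent_to_hyperbola_def AA_def BB_def by auto
  have nz: "a*x'-a*x \<noteq> 0 \<or> b*y'-b*y \<noteq> 0" using ne a0 b by auto
  have G: "AA*(b*y'-b*y)^2 - BB*(a*x'-a*x)^2 = ((a*x)*(b*y'-b*y) - (b*y)*(a*x'-a*x))^2"
    apply (rule hyp_tangent[OF AA BB h(1) _ _ nz])
    using h(2) apply (simp add: cross2_def)
  proof -
    have "inner ((a*x', b*y') - (a*x, b*y)) (fst h / AA, - snd h / BB) = (a*x'-a*x)* fst h/AA - (b*y'-b*y)* snd h/BB"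
      by simp
    thus "(a*x'-a*x)* fst h/AA - (b*y'-b*y)* snd h/BB = 0" using h(3) by simp
  qed
  have G2: "a^2*b^2*(a*(a-2*b)*(y'-y)^2 - b*(2*a-b)*(x'-x)^2) = a^2*b^2*((a-b)^2*(x*y'-y*x')^2)"
  proof -
    have "(a-b)^2*(AA*(b*y'-b*y)^2 - BB*(a*x'-a*x)^2) = (a-b)^2*((a*x)*(b*y'-b*y) - (b*y)*(a*x'-a*x))^2"
      using G by simp
    moreover have "(a-b)^2*(AA*(b*y'-b*y)^2 - BB*(a*x'-a*x)^2) = a^2*b^2*(a*(a-2*b)*(y'-y)^2 - b*(2*a-b)*(x'-x)^2)"
    proof -
      have q: "(a-b)^2 \<noteq> 0" using a0 by simp
      have A1: "(a-b)^2*AA = a^3*(a-2*b)" unfolding AA_def using q by simp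
      have B1: "(a-b)^2*BB = b^3*(2*a-b)" unfolding BB_def using q by simp
      show ?thesis using A1 B1 by algebra
    qed
    ultimately show ?thesis by (simp add: algebra_simps power2_eq_square)
  qed
  hence G3: "a*(a-2*b)*(y'-y)^2 - b*(2*a-b)*(x'-x)^2 = (a-b)^2*(x*y'-y*x')^2"
    using a0 b by simp
  have F: "(1 - (x*x'+y*y'))*((a-b)*(b*x*x' - a*y*y') - a*b) = 0"
    using G3 u1 u2 by algebra
  have "1 - (x*x'+y*y') \<noteq> 0"
  proof
    assume "1 - (x*x'+y*y') = 0"
    hence "(x-x')^2 + (y-y')^2 = 0" using u1 u2 by algebra
    hence "x = x'" "y = y'" by (simp_all add: sum_power2_eq_zero_iff)
    thus False using ne by simp
  qed
  thus ?thesis using F by simp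
qed



lemma cos2_dir_angle:
  fixes u v :: "real \<times> real"
  assumes "u \<noteq> 0" "v \<noteq> 0"
  shows "cos (2 * dir_angle u v) = 2*(inner u v)^2/(inner u u * inner v v) - 1"
proof -
  have nu: "norm u > 0" "norm v > 0" using assms by auto
  define r where "r = inner u v / (norm u * norm v)"
  have "\<bar>inner u v\<bar> \<le> norm u * norm v" by (rule Cauchy_Schwarz_ineq2)
  hence "\<bar>r\<bar> \<le> 1" unfolding r_def using nu by (simp add: abs_div divide_le_eq_1 abs_mult)
  hence r1: "-1 \<le> r" "r \<le> 1" by auto
  have "cos (2 * dir_angle u v) = 2 * (cos (arccos r))^2 - 1"
    unfolding dir_angle_def r_def[symmetric] by (rule cos_double_cos)
  also have "\<dots> = 2*r^2 - 1" using r1 by simp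
  also have "r^2 = (inner u v)^2/(inner u u * inner v v)"
    unfolding r_def by (simp add: power_divide power_mult_distrib power2_norm_eq_inner)
  finally show ?thesis by simp
qed

lemma seg_angle_poly:
  fixes a b x y x' y' :: real
  assumes u1: "x^2+y^2 = 1" and u2: "x'^2+y'^2=1" and r: "(a-b)*(b*x*x' - a*y*y') = a*b"
  shows "(a-b)^2*(2*(b^2*x*x' + a^2*y*y')^2) = (a-b)^2*((1-(x*x'+y*y'))*(b^2*x^2+a^2*y^2)*(b^2*x'^2+a^2*y'^2))"
  using assms by algebra

lemma seg_angle:
  fixes a b x y x' y' :: real
  assumes b: "0 < b" and ab: "b < a"
    and u1: "x^2+y^2 = 1" and u2: "x'^2+y'^2=1" and r: "(a-b)*(b*x*x' - a*y*y') = a*b"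
  shows "cos (2 * dir_angle (ell_tangent a b (a*x, b*y)) (ell_tangent a b (a*x', b*y'))) = -(x*x'+y*y')"
proof -
  have a0: "a > 0" "a - b \<noteq> 0" using assms by auto
  have t1: "ell_tangent a b (a*x, b*y) = (-y/b, x/a)" unfolding ell_tangent_def
    using a0 b by (simp add: power2_eq_square)
  have t2: "ell_tangent a b (a*x', b*y') = (-y'/b, x'/a)" unfolding ell_tangent_def
    using a0 b by (simp add: power2_eq_square)
  have nz1: "(-y/b, x/a) \<noteq> 0" using u1 a0 b by (auto simp: zero_prod_def)
  have nz2: "(-y'/b, x'/a) \<noteq> 0" using u2 a0 b by (auto simp: zero_prod_def)
  define I where "I = b^2*x*x' + a^2*y*y'"
  define Iu where "Iu = b^2*x^2+a^2*y^2"
  define Iv where "Iv = b^2*x'^2+a^2*y'^2"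
  have e1: "inner (-y/b, x/a) (-y'/b, x'/a) = I/(a^2*b^2)" unfolding I_def using a0 b
    by (simp add: field_simps power2_eq_square)
  have e2: "inner (-y/b, x/a) (-y/b, x/a) = Iu/(a^2*b^2)" unfolding Iu_def using a0 b
    by (simp add: field_simps power2_eq_square)
  have e3: "inner (-y'/b, x'/a) (-y'/b, x'/a) = Iv/(a^2*b^2)" unfolding Iv_def using a0 b
    by (simp add: field_simps power2_eq_square)
  have pos: "\<And>p q. p^2+q^2 = 1 \<Longrightarrow> b^2*p^2+a^2*q^2 > 0"
  proof -
    fix p q :: real assume h: "p^2+q^2 = 1"
    have "p \<noteq> 0 \<or> q \<noteq> 0" using h by auto
    thus "b^2*p^2+a^2*q^2 > 0" using a0 b
      by (auto intro: add_pos_nonneg add_nonneg_pos)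
  qed
  have Iu0: "Iu > 0" unfolding Iu_def using pos[OF u1] .
  have Iv0: "Iv > 0" unfolding Iv_def using pos[OF u2] .
  have key: "2*I^2 = (1-(x*x'+y*y'))*Iu*Iv"
    using seg_angle_poly[OF u1 u2 r] a0 unfolding I_def Iu_def Iv_def by simp
  have "cos (2 * dir_angle (-y/b, x/a) (-y'/b, x'/a)) = 2*(I/(a^2*b^2))^2/((Iu/(a^2*b^2))*(Iv/(a^2*b^2))) - 1"
    using cos2_dir_angle[OF nz1 nz2] e1 e2 e3 by simp
  also have "\<dots> = 2*I^2/(Iu*Iv) - 1" using a0 b by (simp add: field_simps power2_eq_square)
  also have "\<dots> = -(x*x'+y*y')" using key Iu0 Iv0 by (simp add: field_simps)
  finally show ?thesis using t1 t2 by simp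
qed

lemma jident:
  fixes a b x y x' y' :: real
  assumes u1: "x^2+y^2 = 1" and u2: "x'^2+y'^2=1" and r: "(a-b)*(b*x*x' - a*y*y') = a*b"
  shows "(1-(x*x'+y*y'))^2*(a-b)^2 = (a*(x'-x))^2 + (b*(y'-y))^2"
  using assms by algebra

lemma normal_chord:
  fixes a b x y x' y' :: real
  assumes b: "0 < b" and ab: "b < a"
    and u1: "x^2+y^2 = 1" and u2: "x'^2+y'^2=1" and ne: "(x,y) \<noteq> (x',y')"
    and r: "(a-b)*(b*x*x' - a*y*y') = a*b"
    and cr: "cross2 ((a*x', b*y') - (a*x, b*y)) (ell_normal a b (a*x, b*y)) = 0"
  shows "(a-b)^2*(b^2*x^2+a^2*y^2) = a^2*b^2"
proof -
  have a0: "a > 0" "a - b \<noteq> 0" using assms by auto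
  have CR: "a^2*(x'-x)*y - b^2*(y'-y)*x = 0"
  proof -
    have n: "ell_normal a b (a*x, b*y) = (x/a, y/b)" unfolding ell_normal_def
      using a0 b by (simp add: power2_eq_square)
    have "(a*x'-a*x)*(y/b) - (b*y'-b*y)*(x/a) = 0" using cr unfolding n cross2_def by simp
    hence "a*b*((a*x'-a*x)*(y/b) - (b*y'-b*y)*(x/a)) = 0" by simp
    moreover have "a*b*((a*x'-a*x)*(y/b) - (b*y'-b*y)*(x/a)) = a^2*(x'-x)*y - b^2*(y'-y)*x"
      using a0 b by (simp add: algebra_simps power2_eq_square)
    ultimately show ?thesis by metis
  qed
  define D where "D = (a*(x'-x))^2 + (b*(y'-y))^2"
  have J: "(1-(x*x'+y*y'))^2*(a-b)^2 = D" unfolding D_def by (rule jident[OF u1 u2 r])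
  have c1: "1-(x*x'+y*y') = -((x'-x)*x + (y'-y)*y)" using u1 by algebra
  have L: "(1-(x*x'+y*y'))^2*a^2*b^2 + (a^2*(x'-x)*y - b^2*(y'-y)*x)^2 = D*(b^2*x^2+a^2*y^2)"
    unfolding D_def c1 by algebra
  have L2: "(1-(x*x'+y*y'))^2*a^2*b^2 = D*(b^2*x^2+a^2*y^2)" using L CR by simp
  have D0: "D \<noteq> 0"
  proof
    assume "D = 0"
    hence "a*(x'-x) = 0" "b*(y'-y) = 0" unfolding D_def by (simp_all add: sum_power2_eq_zero_iff)
    thus False using ne a0 b by simp
  qed
  have "D*((a-b)^2*(b^2*x^2+a^2*y^2)) = (a-b)^2*(D*(b^2*x^2+a^2*y^2))" by (simp only: ac_simps)
  also have "\<dots> = (a-b)^2*((1-(x*x'+y*y'))^2*a^2*b^2)" using L2 by simp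
  also have "\<dots> = ((1-(x*x'+y*y'))^2*(a-b)^2)*(a^2*b^2)" by (simp only: ac_simps)
  also have "\<dots> = D*(a^2*b^2)" using J by simp
  finally have "D*((a-b)^2*(b^2*x^2+a^2*y^2)) = D*(a^2*b^2)" .
  thus ?thesis using D0 by simp
qed

lemma vieta:
  fixes A B C w1 w2 :: complex
  assumes "A \<noteq> 0" "A*w1^2+B*w1+C = 0" "A*w2^2+B*w2+C = 0" "w1 = w2 \<Longrightarrow> B^2 = 4*A*C"
  shows "A*(w1+w2) = -B \<and> A*(w1*w2) = C"
proof (cases "w1 = w2")
  case True
  have "(2*A*w1+B)^2 = 0" using assms(2) assms(4)[OF True] by algebra
  hence "2*A*w1+B = 0" by simp
  thus ?thesis using True assms(2) by algebra
next
  case False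
  have "(w1-w2)*(A*(w1+w2)+B) = 0" using assms(2,3) by algebra
  hence "A*(w1+w2)+B = 0" using False by simp
  hence "A*(w1+w2) = -B" by (simp add: eq_neg_iff_add_eq_0)
  thus ?thesis using assms(2) by algebra
qed



lemma alpha_nz:
  fixes a b x y :: real
  assumes b: "0 < b" and ab: "b < a" and u: "x^2+y^2 = 1"
  shows "(complex_of_real a + complex_of_real b)*(Complex x y)^2 + (complex_of_real b - complex_of_real a) \<noteq> 0"
proof
  assume h: "(complex_of_real a + complex_of_real b)*(Complex x y)^2 + (complex_of_real b - complex_of_real a) = 0"
  have nz: "norm (Complex x y) = 1" using u by (simp add: complex_norm)
  have "complex_of_real (a+b) * (Complex x y)^2 = complex_of_real (a-b)" using h
    by (simp add: algebra_simps eq_neg_iff_add_eq_0)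
  hence "norm (complex_of_real (a+b) * (Complex x y)^2) = norm (complex_of_real (a-b))" by simp
  hence "\<bar>a+b\<bar> = \<bar>a-b\<bar>" by (simp only: norm_mult norm_power nz norm_of_real) simp
  thus False using b ab by simp
qed

lemma vertex:
  fixes a b x y xp yp xn yn :: real
  assumes b: "0<b" and ab: "b<a" and u: "x^2+y^2=1" and up: "xp^2+yp^2=1" and un: "xn^2+yn^2=1"
   and rp: "(a-b)*(b*x*xp - a*y*yp) = a*b" and rn: "(a-b)*(b*x*xn - a*y*yn) = a*b"
   and deg: "(xp,yp) = (xn,yn) \<Longrightarrow> (a-b)^2*(b^2*x^2+a^2*y^2) = a^2*b^2"
  shows "((complex_of_real a + complex_of_real b)*(Complex x y)^2 + (complex_of_real b - complex_of_real a))*(Complex xp yp + Complex xn yn)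
           = 4*complex_of_real (a*b/(a-b))*Complex x y \<and>
         ((complex_of_real a + complex_of_real b)*(Complex x y)^2 + (complex_of_real b - complex_of_real a))*(Complex xp yp * Complex xn yn)
           = (complex_of_real b - complex_of_real a)*(Complex x y)^2 + (complex_of_real a + complex_of_real b)"
proof -
  define A' where "A' = complex_of_real a"
  define B' where "B' = complex_of_real b"
  define K where "K = complex_of_real (a*b/(a-b))"
  define Z where "Z = Complex x y"
  have hab: "A' - B' \<noteq> 0" unfolding A'_def B'_def using ab by simp
  have hk: "K*(A'-B') = A'*B'"
  proof -
    have "a*b/(a-b)*(a-b) = a*b" using ab by simp
    hence "complex_of_real (a*b/(a-b)) * (complex_of_real a - complex_of_real b) = complex_of_real a * complex_of_real b"
      by (metis of_real_mult of_real_diff)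
    thus ?thesis unfolding K_def A'_def B'_def .
  qed
  have hi: "\<i>^2 = (-1::complex)" by simp
  have psi: "((A'+B')*Z^2 + (B'-A'))*W^2 + (-4*K*Z)*W + ((B'-A')*Z^2 + (A'+B')) = 0"
    if W: "W = Complex x' y'" and u': "x'^2+y'^2=1" and r': "(a-b)*(b*x*x' - a*y*y') = a*b" for W x' y'
  proof -
    define X where "X = complex_of_real x"
    define Y where "Y = complex_of_real y"
    define X' where "X' = complex_of_real x'"
    define Y' where "Y' = complex_of_real y'"
    have Zf: "Z = X + \<i>*Y" unfolding Z_def X_def Y_def by (simp add: Complex_eq)
    have Wf: "W = X' + \<i>*Y'" unfolding W X'_def Y'_def by (simp add: Complex_eq)
    have hu: "X^2+Y^2 = 1"
    proof -
      have "complex_of_real (x^2+y^2) = complex_of_real 1" using u by simp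
      thus ?thesis unfolding X_def Y_def by simp
    qed
    have hu': "X'^2+Y'^2 = 1"
    proof -
      have "complex_of_real (x'^2+y'^2) = complex_of_real 1" using u' by simp
      thus ?thesis unfolding X'_def Y'_def by simp
    qed
    have hr: "(A'-B')*(B'*X*X' - A'*Y*Y') = A'*B'"
    proof -
      have "complex_of_real ((a-b)*(b*x*x' - a*y*y')) = complex_of_real (a*b)" using r' by simp
      thus ?thesis unfolding X_def Y_def X'_def Y'_def A'_def B'_def by simp
    qed
    have "(A'-B')*(((A'+B')*Z^2 + (B'-A'))*W^2 + (-4*K*Z)*W + ((B'-A')*Z^2 + (A'+B'))) = 0"
      unfolding Zf Wf using hu hu' hr hk hi by algebra
    thus ?thesis using hab by simp
  qed
  have nzA: "(A'+B')*Z^2 + (B'-A') \<noteq> 0" unfolding A'_def B'_def Z_def using alpha_nz[OF b ab u] .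
  have d: "(-4*K*Z)^2 = 4*((A'+B')*Z^2 + (B'-A'))*((B'-A')*Z^2 + (A'+B'))"
    if eq: "Complex xp yp = Complex xn yn"
  proof -
    have "(xp,yp) = (xn,yn)" using eq by simp
    hence dr: "(a-b)^2*(b^2*x^2+a^2*y^2) = a^2*b^2" by (rule deg)
    define X where "X = complex_of_real x"
    define Y where "Y = complex_of_real y"
    have Zf: "Z = X + \<i>*Y" unfolding Z_def X_def Y_def by (simp add: Complex_eq)
    have hu: "X^2+Y^2 = 1"
    proof -
      have "complex_of_real (x^2+y^2) = complex_of_real 1" using u by simp
      thus ?thesis unfolding X_def Y_def by simp
    qed
    have hd: "(A'-B')^2*(B'^2*X^2+A'^2*Y^2) = A'^2*B'^2"
    proof -
      have "complex_of_real ((a-b)^2*(b^2*x^2+a^2*y^2)) = complex_of_real (a^2*b^2)" using dr by simp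
      thus ?thesis unfolding X_def Y_def A'_def B'_def by simp
    qed
    have "(A'-B')^2*((-4*K*Z)^2 - 4*((A'+B')*Z^2 + (B'-A'))*((B'-A')*Z^2 + (A'+B'))) = 0"
      unfolding Zf using hu hd hk hi by algebra
    thus ?thesis using hab by simp
  qed
  have V: "((A'+B')*Z^2 + (B'-A'))*(Complex xp yp + Complex xn yn) = -(-4*K*Z) \<and>
        ((A'+B')*Z^2 + (B'-A'))*(Complex xp yp * Complex xn yn) = (B'-A')*Z^2 + (A'+B')"
    by (rule vieta[OF nzA psi[OF refl up rp] psi[OF refl un rn] d])
  thus ?thesis unfolding A'_def B'_def K_def Z_def by simp
qed



lemma sum6:
  fixes a b k z0 z1 z2 z3 z4 z5 :: complex
  assumes hk: "k*(a-b) = a*b" and hab: "a - b \<noteq> 0"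
   and h0s: "((a+b)*z0^2 + (b-a))*(z5+z1) = 4*k*z0"
   and h0p: "((a+b)*z0^2 + (b-a))*(z5*z1) = (b-a)*z0^2 + (a+b)"
   and h1s: "((a+b)*z1^2 + (b-a))*(z0+z2) = 4*k*z1"
   and h1p: "((a+b)*z1^2 + (b-a))*(z0*z2) = (b-a)*z1^2 + (a+b)"
   and h3s: "((a+b)*z3^2 + (b-a))*(z2+z4) = 4*k*z3"
   and h3p: "((a+b)*z3^2 + (b-a))*(z2*z4) = (b-a)*z3^2 + (a+b)"
   and h5s: "((a+b)*z5^2 + (b-a))*(z4+z0) = 4*k*z5"
   and h5p: "((a+b)*z5^2 + (b-a))*(z4*z0) = (b-a)*z5^2 + (a+b)"
   and n1: "(a+b)*z1^2 + (b-a) \<noteq> 0"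
   and n3: "(a+b)*z3^2 + (b-a) \<noteq> 0"
   and n5: "(a+b)*z5^2 + (b-a) \<noteq> 0"
  shows "(a-b)*(z0*z1+z1*z2+z2*z3+z3*z4+z4*z5+z5*z0) = 2*(a+b)"
proof -
  have "(a-b)*(z0*z2+z2*z4+z4*z0)*((a+b)*z1^2 + (b-a))*((a+b)*z5^2 + (b-a)) = -(a+b)*((a+b)*z1^2 + (b-a))*((a+b)*z5^2 + (b-a))"
    using hk hab h0s h0p h1s h1p h5s h5p by algebra
  then have e2: "(a-b)*(z0*z2+z2*z4+z4*z0) = -(a+b)" using n1 n5 by simp
  have t: "\<And>z zp zn. ((a+b)*z^2 + (b-a))*(zp+zn) = 4*k*z \<Longrightarrow> ((a+b)*z^2 + (b-a))*(zp*zn) = (b-a)*z^2 + (a+b)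
     \<Longrightarrow> (a+b)*z^2 + (b-a) \<noteq> 0 \<Longrightarrow> (a-b)*(z*(zp+zn)) = (a+b) + (a-b)*(zp*zn)"
  proof -
    fix z zp zn
    assume h1: "((a+b)*z^2 + (b-a))*(zp+zn) = 4*k*z" and h2: "((a+b)*z^2 + (b-a))*(zp*zn) = (b-a)*z^2 + (a+b)"
      and n: "(a+b)*z^2 + (b-a) \<noteq> 0"
    have "((a+b)*z^2 + (b-a)) * ((a-b)*(z*(zp+zn))) = ((a+b)*z^2 + (b-a)) * ((a+b) + (a-b)*(zp*zn))"
      using h1 h2 hk by algebra
    then show "(a-b)*(z*(zp+zn)) = (a+b) + (a-b)*(zp*zn)" using n by simp
  qed
  have "(a-b)*(z1*(z0+z2)) = (a+b) + (a-b)*(z0*z2)" using t[OF h1s h1p n1] .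
  moreover have "(a-b)*(z3*(z2+z4)) = (a+b) + (a-b)*(z2*z4)" using t[OF h3s h3p n3] .
  moreover have "(a-b)*(z5*(z4+z0)) = (a+b) + (a-b)*(z4*z0)" using t[OF h5s h5p n5] .
  ultimately show ?thesis using e2 by algebra
qed

theorem mainTheorem15:
  fixes a b :: real and P :: "nat \<Rightarrow> real \<times> real"
  assumes "0 < b" and "2 * b < a"
    and "typeI_6periodic a b P"
  shows "(\<Sum>i<6. cos (2 * outer_angle a b P i)) = - 2 * (a\<^sup>2 - 4*a*b + b\<^sup>2) / (a - b)\<^sup>2
       \<and> - 2 * (a\<^sup>2 - 4*a*b + b\<^sup>2) / (a - b)\<^sup>2 = joachJ a b * perimL a b - 6"
proof -
  have b: "0 < b" and ab2: "2*b < a" using assms by auto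
  have ab: "b < a" and a0: "a > 0" and amb: "a - b > 0" using b ab2 by auto
  have ell: "\<And>i. on_ellipse a b (P i)" and per: "\<And>i. P (i+6) = P i"
    and rfl: "\<And>i. billiard_reflects a b (P i) (P (i+1)) (P (i+2))"
    and tg: "\<And>i. tangent_to_hyperbola (caustic_a a b) (caustic_b a b) (P i) (P (i+1))"
    using assms(3) unfolding typeI_6periodic_def billiard_periodic_def by auto
  define x where "x i = fst (P i)/a" for i
  define y where "y i = snd (P i)/b" for i
  have Pxy: "P i = (a * x i, b * y i)" for i unfolding x_def y_def using a0 b by (simp add: prod_eq_iff)
  have u: "(x i)^2 + (y i)^2 = 1" for i
    using ell[of i] unfolding on_ellipse_def x_def y_def by (simp add: power_divide)
  have ne: "(x i, y i) \<noteq> (x (i+1), y (i+1))" for i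
  proof
    assume "(x i, y i) = (x (i+1), y (i+1))"
    hence "P i = P (i+1)" using Pxy[of i] Pxy[of "i+1"] by simp
    thus False using rfl[of i] unfolding billiard_reflects_def by simp
  qed
  have rel: "(a-b)*(b*x i*x (i+1) - a*y i*y (i+1)) = a*b" for i
    using rel_from_tangent[OF b ab2 u u ne] tg[of i] Pxy[of i] Pxy[of "i+1"] by simp
  have rels: "(a-b)*(b*x (i+1)*x i - a*y (i+1)*y i) = a*b" for i
    using rel[of i] by (simp add: ac_simps)
  have rel2: "(a-b)*(b*x (i+1)*x (i+2) - a*y (i+1)*y (i+2)) = a*b" for i
    using rel[of "i+1"] by (simp add: add.assoc)
  have H: "((complex_of_real a + complex_of_real b)*(Complex (x (i+1)) (y (i+1)))^2 + (complex_of_real b - complex_of_real a))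
            *(Complex (x i) (y i) + Complex (x (i+2)) (y (i+2)))
           = 4*complex_of_real (a*b/(a-b))*Complex (x (i+1)) (y (i+1)) \<and>
         ((complex_of_real a + complex_of_real b)*(Complex (x (i+1)) (y (i+1)))^2 + (complex_of_real b - complex_of_real a))
            *(Complex (x i) (y i) * Complex (x (i+2)) (y (i+2)))
           = (complex_of_real b - complex_of_real a)*(Complex (x (i+1)) (y (i+1)))^2 + (complex_of_real a + complex_of_real b)" for i
  proof (rule vertex[OF b ab u u u rels rel2])
    assume eq: "(x i, y i) = (x (i+2), y (i+2))"
    hence PP: "P (i+2) = P i" using Pxy[of i] Pxy[of "i+2"] by simp
    define v where "v = P i - P (i+1)"
    have vnz: "v \<noteq> 0" using rfl[of i] unfolding billiard_reflects_def v_def by simp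
    have "cross2 (unitv v + unitv v) (ell_normal a b (P (i+1))) = 0"
      using rfl[of i] PP unfolding billiard_reflects_def v_def by simp
    moreover have "unitv v + unitv v = (2 / norm v) *\<^sub>R v" unfolding unitv_def
      by (simp add: scaleR_add_left[symmetric])
    ultimately have "(2 / norm v) * cross2 v (ell_normal a b (P (i+1))) = 0"
      unfolding cross2_def by (simp add: algebra_simps)
    hence cr0: "cross2 v (ell_normal a b (P (i+1))) = 0" using vnz by simp
    have cr: "cross2 ((a*x i, b*y i) - (a*x (i+1), b*y (i+1))) (ell_normal a b (a*x (i+1), b*y (i+1))) = 0"
      using cr0 unfolding v_def using Pxy[of i] Pxy[of "i+1"] by simp
    have ne': "(x (i+1), y (i+1)) \<noteq> (x i, y i)" using ne[of i] by auto
    show "(a-b)^2*(b^2*(x (i+1))^2+a^2*(y (i+1))^2) = a^2*b^2"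
      by (rule normal_chord[OF b ab u u ne' rels cr])
  qed
  define z where "z i = Complex (x i) (y i)" for i
  define A' where "A' = complex_of_real a"
  define B' where "B' = complex_of_real b"
  define K where "K = complex_of_real (a*b/(a-b))"
  have hk: "K*(A'-B') = A'*B'"
  proof -
    have "a*b/(a-b)*(a-b) = a*b" using ab by simp
    hence "complex_of_real (a*b/(a-b)) * (complex_of_real a - complex_of_real b) = complex_of_real a * complex_of_real b"
      by (metis of_real_mult of_real_diff)
    thus ?thesis unfolding K_def A'_def B'_def .
  qed
  have hab: "A' - B' \<noteq> 0" unfolding A'_def B'_def using ab by simp
  have x6: "x 6 = x 0" "y 6 = y 0" "x 7 = x 1" "y 7 = y 1"
    using per[of 0] per[of 1] unfolding x_def y_def by simp_all
  have Hs: "((A'+B')*(z (i+1))^2 + (B'-A'))*(z i + z (i+2)) = 4*K*z (i+1)"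
     and Hp: "((A'+B')*(z (i+1))^2 + (B'-A'))*(z i * z (i+2)) = (B'-A')*(z (i+1))^2 + (A'+B')" for i
    using H[of i] unfolding z_def A'_def B'_def K_def by auto
  have nzA: "(A'+B')*(z i)^2 + (B'-A') \<noteq> 0" for i
    unfolding z_def A'_def B'_def using alpha_nz[OF b ab u] .
  have S: "(A'-B')*(z 0*z 1+z 1*z 2+z 2*z 3+z 3*z 4+z 4*z 5+z 5*z 0) = 2*(A'+B')"
  proof (rule sum6[OF hk hab])
    show "((A'+B')*(z 0)^2 + (B'-A'))*(z 5+z 1) = 4*K*z 0"
      using Hs[of 5] x6 unfolding z_def by (simp add: eval_nat_numeral)
    show "((A'+B')*(z 0)^2 + (B'-A'))*(z 5*z 1) = (B'-A')*(z 0)^2 + (A'+B')"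
      using Hp[of 5] x6 unfolding z_def by (simp add: eval_nat_numeral)
    show "((A'+B')*(z 1)^2 + (B'-A'))*(z 0+z 2) = 4*K*z 1" using Hs[of 0] by (simp add: eval_nat_numeral)
    show "((A'+B')*(z 1)^2 + (B'-A'))*(z 0*z 2) = (B'-A')*(z 1)^2 + (A'+B')" using Hp[of 0] by (simp add: eval_nat_numeral)
    show "((A'+B')*(z 3)^2 + (B'-A'))*(z 2+z 4) = 4*K*z 3" using Hs[of 2] by (simp add: eval_nat_numeral)
    show "((A'+B')*(z 3)^2 + (B'-A'))*(z 2*z 4) = (B'-A')*(z 3)^2 + (A'+B')" using Hp[of 2] by (simp add: eval_nat_numeral)
    show "((A'+B')*(z 5)^2 + (B'-A'))*(z 4+z 0) = 4*K*z 5"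
      using Hs[of 4] x6 unfolding z_def by (simp add: eval_nat_numeral)
    show "((A'+B')*(z 5)^2 + (B'-A'))*(z 4*z 0) = (B'-A')*(z 5)^2 + (A'+B')"
      using Hp[of 4] x6 unfolding z_def by (simp add: eval_nat_numeral)
  qed (rule nzA)+
  define E where "E i = x i * x (i+1) - y i * y (i+1)" for i
  have SE: "(a-b)*(E 0 + E 1 + E 2 + E 3 + E 4 + E 5) = 2*(a+b)"
  proof -
    have "Re ((A'-B')*(z 0*z 1+z 1*z 2+z 2*z 3+z 3*z 4+z 4*z 5+z 5*z 0)) = Re (2*(A'+B'))"
      using S by simp
    thus ?thesis unfolding E_def z_def A'_def B'_def using x6 by (simp add: algebra_simps eval_nat_numeral)
  qed
  define C where "C i = x i * x (i+1) + y i * y (i+1)" for i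
  have CE: "(a-b)^2 * C i = (a-b)*(a+b)*E i - 2*a*b" for i
    using rel[of i] unfolding C_def E_def by algebra
  have cosC: "cos (2 * outer_angle a b P i) = - C i" for i
    unfolding outer_angle_def C_def Pxy by (rule seg_angle[OF b ab u u rel])
  have sum_exp: "(\<Sum>i<6. cos (2 * outer_angle a b P i)) = -(C 0 + C 1 + C 2 + C 3 + C 4 + C 5)"
    by (simp add: cosC eval_nat_numeral)
  have "(a-b)^2*(C 0 + C 1 + C 2 + C 3 + C 4 + C 5) = (a+b)*((a-b)*(E 0 + E 1 + E 2 + E 3 + E 4 + E 5)) - 12*a*b"
    using CE[of 0] CE[of 1] CE[of 2] CE[of 3] CE[of 4] CE[of 5] by algebra
  also have "\<dots> = 2*(a^2 - 4*a*b + b^2)" unfolding SE by algebra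
  finally have "(a-b)^2*(C 0 + C 1 + C 2 + C 3 + C 4 + C 5) = 2*(a^2 - 4*a*b + b^2)" .
  hence "C 0 + C 1 + C 2 + C 3 + C 4 + C 5 = 2*(a^2 - 4*a*b + b^2)/(a-b)^2"
    using amb by (simp add: field_simps)
  hence first: "(\<Sum>i<6. cos (2 * outer_angle a b P i)) = - 2 * (a\<^sup>2 - 4*a*b + b\<^sup>2) / (a - b)\<^sup>2"
    unfolding sum_exp by (simp only: minus_divide_left mult_minus_left)
  have second: "- 2 * (a\<^sup>2 - 4*a*b + b\<^sup>2) / (a - b)\<^sup>2 = joachJ a b * perimL a b - 6"
  proof -
    have D: "(a-b)^2 \<noteq> 0" using amb by simp
    have "joachJ a b * perimL a b = 4*(a^2-a*b+b^2)/(a-b)^2"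
      unfolding joachJ_def perimL_def by (simp add: power2_eq_square)
    hence "joachJ a b * perimL a b - 6 = (4*(a^2-a*b+b^2) - 6*(a-b)^2)/(a-b)^2"
      using D by (simp add: diff_divide_distrib)
    also have "4*(a^2-a*b+b^2) - 6*(a-b)^2 = - 2 * (a\<^sup>2 - 4*a*b + b\<^sup>2)" by algebra
    finally show ?thesis by simp
  qed
  show ?thesis using first second by simp
qed


end
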